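(* Let $X$ be a Polish space (complete separable metric space with metric $d$) and $f:X\to X$ a continuous map. If for some $\delta>0$ the map $f$ has an uncountable $\delta$-scrambled set, then $f$ has an expansive measure, i.e., there are a Borel probability measure $\mu$ on $X$ and $\epsilon>0$ such that $\mu(\Phi_\epsilon(x))=0$ for all $x\in X$.
   Context: Here $\Phi_\epsilon(x)=\{y\in X: d(f^i(y),f^i(x))\le\epsilon \text{ for all } i\in\mathbb{N}\}$, $\mathbb{N}=\{0,1,2,\dots\}$. For $\delta\ge0$, a $\delta$-scrambled set of $f$ is a subset $S\subset X$ such that for all distinct $x,y\in S$: $\liminf_{n\to\infty}d(f^n(x),f^n(y))=0$ and $\limsup_{n\to\infty}d(f^n(x),f^n(y))>\delta$. *)

theory Defs
  imports "HOL-Probability.Probability"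
begin

definition dyn_ball :: "('a::metric_space \<Rightarrow> 'a) \<Rightarrow> real \<Rightarrow> 'a \<Rightarrow> 'a set" where
  "dyn_ball f \<epsilon> x = {y. \<forall>i::nat. dist ((f ^^ i) y) ((f ^^ i) x) \<le> \<epsilon>}"

definition scrambled_set :: "('a::metric_space \<Rightarrow> 'a) \<Rightarrow> real \<Rightarrow> 'a set \<Rightarrow> bool" where
  "scrambled_set f \<delta> S \<longleftrightarrow>
     (\<forall>x\<in>S. \<forall>y\<in>S. x \<noteq> y \<longrightarrow>
        liminf (\<lambda>n. ereal (dist ((f ^^ n) x) ((f ^^ n) y))) = 0 \<and>
        limsup (\<lambda>n. ereal (dist ((f ^^ n) x) ((f ^^ n) y))) > ereal \<delta>)"

definition expansive_measure :: "('a::metric_space \<Rightarrow> 'a) \<Rightarrow> 'a measure \<Rightarrow> real \<Rightarrow> bool" where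
  "expansive_measure f M \<epsilon> \<longleftrightarrow>
     prob_space M \<and> sets M = sets borel \<and> \<epsilon> > 0 \<and> (\<forall>x. emeasure M (dyn_ball f \<epsilon> x) = 0)"

end

theory Submission
  imports Defs
begin
lemma countable_noncond:
  fixes A :: "'a::{metric_space,second_countable_topology} set"
  shows "countable {x\<in>A. \<exists>e>0. countable (A \<inter> ball x e)}"
proof -
  obtain B :: "'a set set" where B: "countable B" "\<And>C. C \<in> B \<Longrightarrow> open C"
    "\<And>S. open S \<Longrightarrow> \<exists>U. U \<subseteq> B \<and> S = \<Union>U"
    using univ_second_countable by blast
  have "{x\<in>A. \<exists>e>0. countable (A \<inter> ball x e)} \<subseteq> \<Union>((\<lambda>U. A \<inter> U) ` {U\<in>B. countable (A \<inter> U)})"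
  proof
    fix x assume "x \<in> {x\<in>A. \<exists>e>0. countable (A \<inter> ball x e)}"
    then obtain e where x: "x \<in> A" "e > 0" "countable (A \<inter> ball x e)" by blast
    obtain U where U: "U \<subseteq> B" "ball x e = \<Union>U" using B(3)[of "ball x e"] by auto
    then obtain V where V: "V \<in> U" "x \<in> V" using x(2) by (metis UnionE centre_in_ball)
    have "A \<inter> V \<subseteq> A \<inter> ball x e" using U V by auto
    hence "countable (A \<inter> V)" using x(3) countable_subset by blast
    thus "x \<in> \<Union>((\<lambda>U. A \<inter> U) ` {U\<in>B. countable (A \<inter> U)})" using U V x by blast
  qed
  moreover have "countable (\<Union>((\<lambda>U. A \<inter> U) ` {U\<in>B. countable (A \<inter> U)}))"
  proof -
    have c1: "countable {U\<in>B. countable (A \<inter> U)}" using B(1) by (rule countable_subset[rotated]) auto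
    show ?thesis by (rule countable_UN[OF c1]) simp
  qed
  ultimately show ?thesis using countable_subset by blast
qed

lemma two_cond_points:
  fixes A :: "'a::{metric_space,second_countable_topology} set"
  assumes "uncountable A"
  shows "\<exists>q1 q2. q1 \<in> A \<and> q2 \<in> A \<and> q1 \<noteq> q2 \<and> (\<forall>e>0. uncountable (A \<inter> ball q1 e))
     \<and> (\<forall>e>0. uncountable (A \<inter> ball q2 e))"
proof -
  let ?N = "{x\<in>A. \<exists>e>0. countable (A \<inter> ball x e)}"
  have cnc: "countable ?N" by (rule countable_noncond)
  have sub: "A \<subseteq> (A - ?N) \<union> ?N" by blast
  have "uncountable (A - ?N)"
  proof
    assume "countable (A - ?N)"
    hence "countable ((A - ?N) \<union> ?N)" by (rule countable_Un[OF _ cnc])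
    thus False using assms countable_subset[OF sub] by blast
  qed
  hence "infinite (A - ?N)" using countable_finite by blast
  then have "A - ?N \<noteq> {}" by (rule infinite_imp_nonempty)
  then obtain q1 where q1: "q1 \<in> A - ?N" by blast
  have "infinite (A - ?N - {q1})" using \<open>infinite (A - ?N)\<close> by simp
  then have "A - ?N - {q1} \<noteq> {}" by (rule infinite_imp_nonempty)
  then obtain q2 where q2: "q2 \<in> A - ?N - {q1}" by blast
  have "\<forall>e>0. uncountable (A \<inter> ball q1 e)" using q1 by blast
  moreover have "\<forall>e>0. uncountable (A \<inter> ball q2 e)" using q2 by blast
  ultimately show ?thesis using q1 q2 by blast
qed

lemma cont_funpow:
  fixes f :: "'a::topological_space \<Rightarrow> 'a"
  assumes "continuous_on UNIV f"
  shows "continuous_on UNIV (f ^^ n)"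
proof (induction n)
  case 0
  have "f ^^ 0 = (\<lambda>x. x)" by (rule ext) simp
  then show ?case by (simp add: continuous_on_id)
next
  case (Suc n)
  have "f ^^ Suc n = f \<circ> (f ^^ n)" by simp
  then show ?case using Suc assms by (metis continuous_on_compose continuous_on_subset subset_UNIV)
qed

definition Sep :: "('a::metric_space \<Rightarrow> 'a) \<Rightarrow> real \<Rightarrow> 'a \<Rightarrow> 'a \<Rightarrow> bool" where
  "Sep f \<delta> y z \<longleftrightarrow> (\<exists>n. dist ((f ^^ n) y) ((f ^^ n) z) > \<delta>)"

definition good :: "'a::metric_space set \<Rightarrow> 'a \<times> real \<Rightarrow> bool" where
  "good S x \<longleftrightarrow> snd x > 0 \<and> uncountable (S \<inter> ball (fst x) (snd x))"

definition spec :: "('a::metric_space \<Rightarrow> 'a) \<Rightarrow> real \<Rightarrow> 'a set \<Rightarrow> 'a \<times> real \<Rightarrow> 'a \<times> 'a \<times> real \<Rightarrow> bool" where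
  "spec f \<delta> S x c \<longleftrightarrow> (case x of (p, r) \<Rightarrow> case c of (q1, q2, \<rho>) \<Rightarrow>
     \<rho> > 0 \<and> \<rho> \<le> r/2 \<and> cball q1 \<rho> \<subseteq> cball p r \<and> cball q2 \<rho> \<subseteq> cball p r \<and>
     good S (q1, \<rho>) \<and> good S (q2, \<rho>) \<and> (\<forall>y\<in>cball q1 \<rho>. \<forall>z\<in>cball q2 \<rho>. Sep f \<delta> y z))"

lemma scr_Sep:
  assumes "scrambled_set f \<delta> S" "x \<in> S" "y \<in> S" "x \<noteq> y"
  shows "Sep f \<delta> x y"
proof (rule ccontr)
  assume "\<not> Sep f \<delta> x y"
  hence "\<forall>n. ereal (dist ((f ^^ n) x) ((f ^^ n) y)) \<le> ereal \<delta>" by (auto simp: Sep_def not_less)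
  hence "limsup (\<lambda>n. ereal (dist ((f ^^ n) x) ((f ^^ n) y))) \<le> ereal \<delta>"
    by (intro Limsup_bounded) auto
  moreover have "limsup (\<lambda>n. ereal (dist ((f ^^ n) x) ((f ^^ n) y))) > ereal \<delta>"
    using assms unfolding scrambled_set_def by blast
  ultimately show False by simp
qed

lemma split_node:
  fixes f :: "'a::polish_space \<Rightarrow> 'a"
  assumes cont: "continuous_on UNIV f" and scr: "scrambled_set f \<delta> S" and g: "good S (p, r)"
  shows "\<exists>c. spec f \<delta> S (p, r) c"
proof -
  have r: "r > 0" and unc: "uncountable (S \<inter> ball p r)" using g by (auto simp: good_def)
  obtain q1 q2 where q: "q1 \<in> S \<inter> ball p r" "q2 \<in> S \<inter> ball p r" "q1 \<noteq> q2"
     "\<forall>e>0. uncountable (S \<inter> ball p r \<inter> ball q1 e)" "\<forall>e>0. uncountable (S \<inter> ball p r \<inter> ball q2 e)"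
    using two_cond_points[OF unc] by blast
  obtain n where n: "dist ((f ^^ n) q1) ((f ^^ n) q2) > \<delta>"
    using scr_Sep[OF scr _ _ q(3)] q by (auto simp: Sep_def)
  define \<eta> where "\<eta> = dist ((f ^^ n) q1) ((f ^^ n) q2) - \<delta>"
  have eta: "\<eta> > 0" using n by (simp add: \<eta>_def)
  have cn: "continuous_on UNIV (f ^^ n)" using cont_funpow[OF cont] .
  have "\<forall>e>0. \<exists>d>0. \<forall>x'\<in>UNIV. dist x' q1 < d \<longrightarrow> dist ((f ^^ n) x') ((f ^^ n) q1) < e"
    using cn unfolding continuous_on_iff by blast
  moreover have "\<eta>/2 > 0" using eta by simp
  ultimately obtain d1 where d1: "d1 > 0" "\<And>y. dist y q1 < d1 \<Longrightarrow> dist ((f ^^ n) y) ((f ^^ n) q1) < \<eta>/2"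
    by blast
  have "\<forall>e>0. \<exists>d>0. \<forall>x'\<in>UNIV. dist x' q2 < d \<longrightarrow> dist ((f ^^ n) x') ((f ^^ n) q2) < e"
    using cn unfolding continuous_on_iff by blast
  moreover have "\<eta>/2 > 0" using eta by simp
  ultimately obtain d2 where d2: "d2 > 0" "\<And>y. dist y q2 < d2 \<Longrightarrow> dist ((f ^^ n) y) ((f ^^ n) q2) < \<eta>/2"
    by blast
  define \<rho> where "\<rho> = min (min (d1/2) (d2/2)) (min (r/2) (min ((r - dist p q1)/2) ((r - dist p q2)/2)))"
  have dq: "dist p q1 < r" "dist p q2 < r" using q by auto
  have rho: "\<rho> > 0" "\<rho> < d1" "\<rho> < d2" "\<rho> \<le> r/2" "\<rho> \<le> (r - dist p q1)/2" "\<rho> \<le> (r - dist p q2)/2"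
  proof -
    have m: "\<And>a b::real. min a b \<le> a" "\<And>a b::real. min a b \<le> b" by auto
    have a: "\<rho> \<le> d1/2" "\<rho> \<le> d2/2" "\<rho> \<le> r/2" "\<rho> \<le> (r - dist p q1)/2" "\<rho> \<le> (r - dist p q2)/2"
      unfolding \<rho>_def by (meson m order_trans)+
    have "\<rho> > 0" using d1(1) d2(1) r dq unfolding \<rho>_def by simp
    thus "\<rho> > 0" "\<rho> < d1" "\<rho> < d2" "\<rho> \<le> r/2" "\<rho> \<le> (r - dist p q1)/2" "\<rho> \<le> (r - dist p q2)/2"
      using a d1(1) d2(1) by linarith+
  qed
  have sub1: "cball q1 \<rho> \<subseteq> ball p r"
  proof
    fix y assume "y \<in> cball q1 \<rho>"
    hence "dist q1 y \<le> \<rho>" by simp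
    moreover have "dist p y \<le> dist p q1 + dist q1 y" by (rule dist_triangle)
    ultimately show "y \<in> ball p r" using rho dq by simp
  qed
  have sub2: "cball q2 \<rho> \<subseteq> ball p r"
  proof
    fix y assume "y \<in> cball q2 \<rho>"
    hence "dist q2 y \<le> \<rho>" by simp
    moreover have "dist p y \<le> dist p q2 + dist q2 y" by (rule dist_triangle)
    ultimately show "y \<in> ball p r" using rho dq by simp
  qed
  have g1: "good S (q1, \<rho>)"
  proof -
    have sb: "S \<inter> ball p r \<inter> ball q1 \<rho> \<subseteq> S \<inter> ball q1 \<rho>" by auto
    have "uncountable (S \<inter> ball p r \<inter> ball q1 \<rho>)" using q(4) rho(1) by blast
    hence "uncountable (S \<inter> ball q1 \<rho>)" using countable_subset[OF sb] by blast
    thus ?thesis using rho(1) by (simp add: good_def)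
  qed
  have g2: "good S (q2, \<rho>)"
  proof -
    have sb: "S \<inter> ball p r \<inter> ball q2 \<rho> \<subseteq> S \<inter> ball q2 \<rho>" by auto
    have "uncountable (S \<inter> ball p r \<inter> ball q2 \<rho>)" using q(5) rho(1) by blast
    hence "uncountable (S \<inter> ball q2 \<rho>)" using countable_subset[OF sb] by blast
    thus ?thesis using rho(1) by (simp add: good_def)
  qed
  have sep: "\<forall>y\<in>cball q1 \<rho>. \<forall>z\<in>cball q2 \<rho>. Sep f \<delta> y z"
  proof (intro ballI)
    fix y z assume y: "y \<in> cball q1 \<rho>" and z: "z \<in> cball q2 \<rho>"
    have "dist y q1 < d1" using y rho by (simp add: dist_commute)
    hence a: "dist ((f ^^ n) y) ((f ^^ n) q1) < \<eta>/2" by (rule d1(2))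
    have "dist z q2 < d2" using z rho by (simp add: dist_commute)
    hence b: "dist ((f ^^ n) z) ((f ^^ n) q2) < \<eta>/2" by (rule d2(2))
    have "dist ((f ^^ n) q1) ((f ^^ n) q2) \<le> dist ((f ^^ n) q1) ((f ^^ n) y) + dist ((f ^^ n) y) ((f ^^ n) z) + dist ((f ^^ n) z) ((f ^^ n) q2)"
    proof -
      have "dist ((f ^^ n) q1) ((f ^^ n) q2) \<le> dist ((f ^^ n) q1) ((f ^^ n) y) + dist ((f ^^ n) y) ((f ^^ n) q2)" by (rule dist_triangle)
      moreover have "dist ((f ^^ n) y) ((f ^^ n) q2) \<le> dist ((f ^^ n) y) ((f ^^ n) z) + dist ((f ^^ n) z) ((f ^^ n) q2)" by (rule dist_triangle)
      ultimately show ?thesis by linarith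
    qed
    hence "dist ((f ^^ n) y) ((f ^^ n) z) > \<delta>" using a b by (simp add: \<eta>_def dist_commute)
    thus "Sep f \<delta> y z" by (auto simp: Sep_def)
  qed
  show ?thesis
    by (rule exI[of _ "(q1, q2, \<rho>)"]) (use rho sub1 sub2 g1 g2 sep in \<open>auto simp: spec_def\<close>)
qed


lemma Sep_sym: "Sep f \<delta> y z \<Longrightarrow> Sep f \<delta> z y"
  by (auto simp: Sep_def dist_commute)

primrec tree :: "('a \<times> real \<Rightarrow> 'a \<times> 'a \<times> real) \<Rightarrow> 'a \<times> real \<Rightarrow> nat \<Rightarrow> nat \<Rightarrow> 'a \<times> real" where
  "tree g r0 0 k = r0"
| "tree g r0 (Suc n) k = (case g (tree g r0 n (k div 2)) of (q1, q2, \<rho>) \<Rightarrow> if even k then (q1, \<rho>) else (q2, \<rho>))"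

lemma tree_Suc_spec:
  assumes gs: "\<And>x. good S x \<Longrightarrow> spec f \<delta> S x (g x)"
    and gd: "good S (tree g r0 n (k div 2))"
  obtains p r q1 q2 \<rho> where "tree g r0 n (k div 2) = (p, r)" "g (p, r) = (q1, q2, \<rho>)"
    "spec f \<delta> S (p, r) (q1, q2, \<rho>)" "tree g r0 (Suc n) k = (if even k then (q1, \<rho>) else (q2, \<rho>))"
proof -
  obtain p r where pr: "tree g r0 n (k div 2) = (p, r)" by (cases "tree g r0 n (k div 2)")
  obtain q1 q2 \<rho> where q: "g (p, r) = (q1, q2, \<rho>)" by (cases "g (p, r)")
  have "spec f \<delta> S (p, r) (q1, q2, \<rho>)" using gs[of "(p, r)"] gd pr q by simp
  moreover have "tree g r0 (Suc n) k = (if even k then (q1, \<rho>) else (q2, \<rho>))" using pr q by simp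
  ultimately show ?thesis using that pr q by blast
qed

locale treeloc =
  fixes f :: "'a::polish_space \<Rightarrow> 'a" and \<delta> :: real and S :: "'a set" and g and r0
  assumes gs: "\<And>x. good S x \<Longrightarrow> spec f \<delta> S x (g x)" and g0: "good S r0"
begin

abbreviation "T \<equiv> tree g r0"
abbreviation "C n k \<equiv> cball (fst (T n k)) (snd (T n k))"

lemma T_good: "good S (T n k)"
proof (induction n arbitrary: k)
  case 0 then show ?case using g0 by simp
next
  case (Suc n)
  from tree_Suc_spec[OF gs Suc[of "k div 2"]] obtain p r q1 q2 \<rho> where
    "spec f \<delta> S (p, r) (q1, q2, \<rho>)" "T (Suc n) k = (if even k then (q1, \<rho>) else (q2, \<rho>))" by metis
  then show ?case by (auto simp: spec_def)
qed

lemma T_rad: "snd (T n k) \<le> snd r0 / 2 ^ n"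
proof (induction n arbitrary: k)
  case 0 then show ?case by simp
next
  case (Suc n)
  from tree_Suc_spec[OF gs T_good[of n "k div 2"]] obtain p r q1 q2 \<rho> where
    a: "T n (k div 2) = (p, r)" "spec f \<delta> S (p, r) (q1, q2, \<rho>)" "T (Suc n) k = (if even k then (q1, \<rho>) else (q2, \<rho>))" by metis
  have h1: "2 * \<rho> \<le> r" using a(2) by (simp add: spec_def)
  have "(2 * \<rho>) * 2 ^ n \<le> r * 2 ^ n" using h1 by (intro mult_right_mono) auto
  moreover have "r * 2 ^ n \<le> snd r0" using Suc[of "k div 2"] a(1) by (simp add: field_simps)
  moreover have "\<rho> * 2 ^ Suc n = (2 * \<rho>) * 2 ^ n" by simp
  ultimately have "\<rho> * 2 ^ Suc n \<le> snd r0" by linarith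
  hence "\<rho> \<le> snd r0 / 2 ^ Suc n" by (simp add: field_simps)
  then show ?case using a(3) by simp
qed

lemma T_pos: "snd (T n k) > 0"
  using T_good[of n k] by (simp add: good_def)

lemma T_nest: "C (Suc n) k \<subseteq> C n (k div 2)"
proof -
  from tree_Suc_spec[OF gs T_good[of n "k div 2"]] obtain p r q1 q2 \<rho> where
    a: "T n (k div 2) = (p, r)" "spec f \<delta> S (p, r) (q1, q2, \<rho>)" "T (Suc n) k = (if even k then (q1, \<rho>) else (q2, \<rho>))" by metis
  then show ?thesis by (auto simp: spec_def)
qed

lemma T_sep: "k < 2 ^ n \<Longrightarrow> k' < 2 ^ n \<Longrightarrow> k \<noteq> k' \<Longrightarrow> y \<in> C n k \<Longrightarrow> z \<in> C n k' \<Longrightarrow> Sep f \<delta> y z"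
proof (induction n arbitrary: k k' y z)
  case 0 then show ?case by simp
next
  case (Suc n)
  show ?case
  proof (cases "k div 2 = k' div 2")
    case True
    from tree_Suc_spec[OF gs T_good[of n "k div 2"]] obtain p r q1 q2 \<rho> where
      a: "T n (k div 2) = (p, r)" "spec f \<delta> S (p, r) (q1, q2, \<rho>)" "T (Suc n) k = (if even k then (q1, \<rho>) else (q2, \<rho>))"
      and ag: "g (p, r) = (q1, q2, \<rho>)" by metis
    have b: "T (Suc n) k' = (if even k' then (q1, \<rho>) else (q2, \<rho>))"
      using a(1) ag True by simp
    have sp: "\<forall>y\<in>cball q1 \<rho>. \<forall>z\<in>cball q2 \<rho>. Sep f \<delta> y z" using a(2) by (simp add: spec_def)
    have "even k \<noteq> even k'"
      using True Suc.prems(3) by (metis div_mult_mod_eq even_iff_mod_2_eq_zero odd_iff_mod_2_eq_one)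
    then show ?thesis
    proof (cases "even k")
      case True
      then have "y \<in> cball q1 \<rho>" "z \<in> cball q2 \<rho>" using Suc.prems(4,5) a(3) b \<open>even k \<noteq> even k'\<close> by (auto simp del: tree.simps)
      then show ?thesis using sp by blast
    next
      case False
      then have "y \<in> cball q2 \<rho>" "z \<in> cball q1 \<rho>" using Suc.prems(4,5) a(3) b \<open>even k \<noteq> even k'\<close> by (auto simp del: tree.simps)
      then show ?thesis using sp Sep_sym by blast
    qed
  next
    case False
    have "k div 2 < 2 ^ n" "k' div 2 < 2 ^ n" using Suc.prems(1,2) by auto
    moreover have "y \<in> C n (k div 2)" "z \<in> C n (k' div 2)" using T_nest Suc.prems(4,5) by blast+
    ultimately show ?thesis using Suc.IH False by blast
  qed
qed

end


definition kk :: "nat \<Rightarrow> real \<Rightarrow> nat" where "kk n t = nat \<lfloor>2 ^ n * t\<rfloor>"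

lemma kk_Suc: "kk (Suc n) t div 2 = kk n t"
proof -
  define a where "a = \<lfloor>2 ^ Suc n * t\<rfloor>"
  have "\<lfloor>2 ^ n * t\<rfloor> = \<lfloor>(2 ^ Suc n * t) / real_of_int 2\<rfloor>" by simp
  also have "\<dots> = a div 2" unfolding a_def by (rule floor_divide_real_eq_div) simp
  finally have e: "\<lfloor>2 ^ n * t\<rfloor> = a div 2" .
  show ?thesis
  proof (cases "0 \<le> a")
    case True
    then show ?thesis unfolding kk_def e a_def[symmetric] using nat_div_distrib[of a 2] by simp
  next
    case False
    then show ?thesis unfolding kk_def e a_def[symmetric] by simp
  qed
qed

lemma kk_bound: "0 \<le> t \<Longrightarrow> t < 1 \<Longrightarrow> kk n t < 2 ^ n"
proof -
  assume t: "0 \<le> t" "t < 1"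
  have "2 ^ n * t < 2 ^ n" using t by simp
  hence "\<lfloor>2 ^ n * t\<rfloor> < 2 ^ n" by (metis floor_less_iff of_int_numeral of_int_power)
  thus ?thesis unfolding kk_def by (simp add: nat_less_iff)
qed

lemma kk_interval: "0 \<le> t \<Longrightarrow> real (kk n t) \<le> 2 ^ n * t \<and> 2 ^ n * t < real (kk n t) + 1"
proof -
  assume t: "0 \<le> t"
  have "0 \<le> 2 ^ n * t" using t by simp
  hence "0 \<le> \<lfloor>2 ^ n * t\<rfloor>" by simp
  hence "real (kk n t) = real_of_int \<lfloor>2 ^ n * t\<rfloor>" unfolding kk_def by simp
  thus ?thesis by linarith
qed

lemma kk_meas: "(\<lambda>t. kk n t) \<in> measurable borel (count_space UNIV)"
  unfolding kk_def by measurable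

context treeloc
begin

lemma C_chain: "m \<le> n \<Longrightarrow> C n (kk n t) \<subseteq> C m (kk m t)"
proof (induction rule: dec_induct)
  case base then show ?case by simp
next
  case (step n)
  have "C (Suc n) (kk (Suc n) t) \<subseteq> C n (kk (Suc n) t div 2)" by (rule T_nest)
  then show ?case using step kk_Suc by simp
qed

definition "cc n t = fst (T n (kk n t))"

lemma cc_in: "m \<le> n \<Longrightarrow> cc n t \<in> C m (kk m t)"
proof -
  assume "m \<le> n"
  have "cc n t \<in> C n (kk n t)" unfolding cc_def using T_pos[of n "kk n t"] by simp
  thus ?thesis using C_chain[OF \<open>m \<le> n\<close>] by blast
qed

lemma cc_dist: "m \<le> n \<Longrightarrow> dist (fst (T m (kk m t))) (cc n t) \<le> snd r0 / 2 ^ m"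
  using cc_in[of m n t] T_rad[of m "kk m t"] by simp

lemma r0_pos: "snd r0 > 0" using g0 by (simp add: good_def)

lemma cc_Cauchy: "Cauchy (\<lambda>n. cc n t)"
proof (rule metric_CauchyI)
  fix e :: real assume e: "0 < e"
  obtain M where M: "(1/2) ^ M < e / (2 * snd r0)"
    using real_arch_pow_inv[of "e / (2 * snd r0)" "1/2"] e r0_pos by auto
  have M': "snd r0 / 2 ^ M < e / 2"
    using M r0_pos by (simp add: field_simps power_one_over)
  show "\<exists>M. \<forall>m\<ge>M. \<forall>n\<ge>M. dist (cc m t) (cc n t) < e"
  proof (intro exI allI impI)
    fix m n assume "m \<ge> M" "n \<ge> M"
    have "dist (cc m t) (cc n t) \<le> dist (fst (T M (kk M t))) (cc m t) + dist (fst (T M (kk M t))) (cc n t)"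
      by (rule dist_triangle3)
    also have "\<dots> \<le> snd r0 / 2 ^ M + snd r0 / 2 ^ M"
      using cc_dist[OF \<open>m \<ge> M\<close>] cc_dist[OF \<open>n \<ge> M\<close>] by (rule add_mono)
    finally show "dist (cc m t) (cc n t) < e" using M' by linarith
  qed
qed

definition "hh t = lim (\<lambda>n. cc n t)"

lemma cc_lim: "(\<lambda>n. cc n t) \<longlonglongrightarrow> hh t"
  unfolding hh_def using cc_Cauchy Cauchy_convergent_iff convergent_LIMSEQ_iff by blast

lemma hh_in: "hh t \<in> C m (kk m t)"
proof -
  have "dist (fst (T m (kk m t))) (hh t) \<le> snd (T m (kk m t))"
  proof (rule Lim_dist_ubound[OF trivial_limit_sequentially cc_lim])
    show "\<forall>\<^sub>F n in sequentially. dist (fst (T m (kk m t))) (cc n t) \<le> snd (T m (kk m t))"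
      using cc_in[of m _ t] by (intro eventually_sequentiallyI[of m]) simp
  qed
  thus ?thesis by simp
qed

lemma cc_meas: "cc n \<in> borel_measurable borel"
proof -
  have "(\<lambda>t. fst (T n (kk n t))) = (\<lambda>k. fst (T n k)) \<circ> (\<lambda>t. kk n t)" by auto
  moreover have "(\<lambda>k. fst (T n k)) \<in> measurable (count_space UNIV) borel" by simp
  ultimately show ?thesis unfolding cc_def using measurable_comp[OF kk_meas] by metis
qed

lemma hh_meas: "hh \<in> borel_measurable borel"
  by (rule borel_measurable_LIMSEQ_metric[OF cc_meas cc_lim])

end


lemma dyn_ball_closed:
  fixes f :: "'a::metric_space \<Rightarrow> 'a"
  assumes "continuous_on UNIV f"
  shows "closed (dyn_ball f e x)"
proof -
  have "dyn_ball f e x = (\<Inter>i. {y. dist ((f ^^ i) y) ((f ^^ i) x) \<le> e})"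
    unfolding dyn_ball_def by auto
  moreover have "closed {y. dist ((f ^^ i) y) ((f ^^ i) x) \<le> e}" for i
    by (intro closed_Collect_le continuous_on_dist cont_funpow[OF assms] continuous_on_const)
  ultimately show ?thesis by auto
qed

lemma ennreal_le_pow_zero:
  assumes "\<And>n. (e::ennreal) \<le> ennreal ((1/2) ^ n)"
  shows "e = 0"
proof -
  have "(\<lambda>n. ennreal ((1/2::real) ^ n)) \<longlonglongrightarrow> ennreal 0"
    by (intro tendsto_ennrealI LIMSEQ_power_zero) simp
  hence "e \<le> ennreal 0" using assms by (intro LIMSEQ_le_const) auto
  thus ?thesis by simp
qed

theorem theorem4p7:
  fixes f :: "'a::polish_space \<Rightarrow> 'a" and \<delta> :: real
  assumes "continuous_on UNIV f"
    and "\<delta> > 0"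
    and "scrambled_set f \<delta> S" and "uncountable S"
  shows "\<exists>M \<epsilon>. expansive_measure f M \<epsilon>"
proof -
  note cont = assms(1) and scr = assms(3)
  have "\<forall>x. \<exists>c. good S x \<longrightarrow> spec f \<delta> S x c"
  proof
    fix x :: "'a \<times> real"
    obtain p r where x: "x = (p, r)" by (cases x)
    show "\<exists>c. good S x \<longrightarrow> spec f \<delta> S x c" using split_node[OF cont scr, of p r] x by blast
  qed
  then obtain g where g: "\<And>x. good S x \<Longrightarrow> spec f \<delta> S x (g x)" by metis
  obtain q1 where q1: "\<forall>e>0. uncountable (S \<inter> ball q1 e)"
    using two_cond_points[OF assms(4)] by blast
  define r0 where "r0 = (q1, 1::real)"
  have g0: "good S r0" using q1 by (simp add: r0_def good_def)
  interpret treeloc f \<delta> S g r0 using g g0 by unfold_locales auto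
  define M0 where "M0 = uniform_measure lborel {0..<1::real}"
  have e01: "emeasure lborel {0..<1::real} = 1" by simp
  have pM0: "prob_space M0" unfolding M0_def by (rule prob_space_uniform_measure) (simp_all add: e01)
  have hM: "hh \<in> measurable M0 borel"
    using hh_meas measurable_cong_sets[of M0 borel borel borel] by (simp add: M0_def)
  define \<mu> where "\<mu> = distr M0 borel hh"
  define \<epsilon> where "\<epsilon> = \<delta> / 2"
  have "expansive_measure f \<mu> \<epsilon>"
    unfolding expansive_measure_def
  proof (intro conjI allI)
    show "prob_space \<mu>" unfolding \<mu>_def by (rule prob_space.prob_space_distr[OF pM0 hM])
    show "sets \<mu> = sets borel" unfolding \<mu>_def by simp
    show "\<epsilon> > 0" using assms(2) by (simp add: \<epsilon>_def)
    fix x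
    let ?P = "dyn_ball f \<epsilon> x"
    have Pb: "?P \<in> sets borel" using dyn_ball_closed[OF cont] by (simp add: borel_closed)
    define E where "E = {0..<1::real} \<inter> hh -` ?P"
    have Hm: "hh -` ?P \<in> sets borel"
    proof -
      have "hh -` ?P \<inter> space borel \<in> sets borel" using hh_meas Pb by (rule measurable_sets)
      thus ?thesis by simp
    qed
    have Em: "E \<in> sets lborel" unfolding E_def using Hm by auto
    have bound: "emeasure lborel E \<le> ennreal ((1/2) ^ n)" for n
    proof (cases "E = {}")
      case True then show ?thesis by simp
    next
      case False
      then obtain t0 where t0: "t0 \<in> E" by blast
      define K where "K = kk n t0"
      have same: "kk n t = K" if t: "t \<in> E" for t
      proof (rule ccontr)
        assume ne: "kk n t \<noteq> K"
        have tt: "0 \<le> t" "t < 1" "0 \<le> t0" "t0 < 1" using t t0 by (auto simp: E_def)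
        have "Sep f \<delta> (hh t) (hh t0)"
          using T_sep[OF kk_bound[OF tt(1,2)] kk_bound[OF tt(3,4)] ne[unfolded K_def] hh_in hh_in] .
        then obtain m where m: "dist ((f ^^ m) (hh t)) ((f ^^ m) (hh t0)) > \<delta>" by (auto simp: Sep_def)
        have "hh t \<in> ?P" "hh t0 \<in> ?P" using t t0 by (auto simp: E_def)
        hence "dist ((f ^^ m) (hh t)) ((f ^^ m) x) \<le> \<epsilon>" "dist ((f ^^ m) (hh t0)) ((f ^^ m) x) \<le> \<epsilon>"
          by (auto simp: dyn_ball_def)
        moreover have "dist ((f ^^ m) (hh t)) ((f ^^ m) (hh t0)) \<le> dist ((f ^^ m) (hh t)) ((f ^^ m) x) + dist ((f ^^ m) (hh t0)) ((f ^^ m) x)"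
          by (rule dist_triangle2)
        ultimately show False using m by (simp add: \<epsilon>_def)
      qed
      have sub: "E \<subseteq> {real K / 2 ^ n ..< (real K + 1) / 2 ^ n}"
      proof
        fix t assume t: "t \<in> E"
        have "0 \<le> t" using t by (simp add: E_def)
        from kk_interval[OF this, of n] same[OF t]
        show "t \<in> {real K / 2 ^ n ..< (real K + 1) / 2 ^ n}" by (simp add: field_simps)
      qed
      have "emeasure lborel E \<le> emeasure lborel {real K / 2 ^ n ..< (real K + 1) / 2 ^ n}"
        by (rule emeasure_mono[OF sub]) simp
      also have "\<dots> = ennreal ((real K + 1) / 2 ^ n - real K / 2 ^ n)"
        by (rule emeasure_lborel_Ico) (simp add: divide_right_mono)
      also have "(real K + 1) / 2 ^ n - real K / 2 ^ n = (1/2) ^ n"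
        by (simp add: field_simps power_one_over)
      finally show ?thesis .
    qed
    have E0: "emeasure lborel E = 0" using bound by (rule ennreal_le_pow_zero)
    have "emeasure \<mu> ?P = emeasure M0 (hh -` ?P \<inter> space M0)"
      unfolding \<mu>_def by (rule emeasure_distr[OF hM Pb])
    also have "\<dots> = emeasure lborel ({0..<1} \<inter> (hh -` ?P)) / emeasure lborel {0..<1::real}"
      unfolding M0_def using Hm by (subst emeasure_uniform_measure) auto
    also have "\<dots> = 0" using E0 by (simp add: E_def)
    finally show "emeasure \<mu> ?P = 0" .
  qed
  thus ?thesis by blast
qed


end
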